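(* Let $m\ge1$. Every constrained Young tableau of size $2\times m$ is realizable: for every such tableau $T$ there exist $\mathbf{a}=(a_1,a_2)$ and $\mathbf{b}=(b_1,\dots,b_m)$ with $0=a_1\le a_2$ and $0=b_1\le b_2\le\dots\le b_m$ such that for all cells $(i,j),(i',j')\in[2]\times[m]$ one has $T(i,j)<T(i',j')\iff a_i+b_j<a_{i'}+b_{j'}$ and $T(i,j)=T(i',j')\iff a_i+b_j=a_{i'}+b_{j'}$.
   Context: A constrained Young tableau of size $p\times m$ is a map $T:[p]\times[m]\to\{1,\dots,K\}$ onto $\{1,\dots,K\}$ (for some $K$) that is weakly increasing along each row and each column, and satisfies: (i) if $T(i,j)=T(i,j+1)$ for some $i\in[p]$, then $T(i',j)=T(i',j+1)$ for all $i'\in[p]$; (ii) if $T(i,j)=T(i+1,j)$ for some $j\in[m]$, then $T(i,j')=T(i+1,j')$ for all $j'\in[m]$. It is realizable if it is the tableau of relative orders of the values $a_i+b_j$ for some vectors $\mathbf{a},\mathbf{b}$ with weakly increasing entries, as in the claim. (These values are the values of the linear functional $(\mathbf{a},\mathbf{b})$ on the vertices $(\mathbf{e}_i,\mathbf{e}_j)$ of $\Delta_{p-1}\times\Delta_{m-1}$.) *)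

theory Defs
  imports Complex_Main
begin

definition constrained_young_tableau :: "nat \<Rightarrow> nat \<Rightarrow> (nat \<Rightarrow> nat \<Rightarrow> nat) \<Rightarrow> bool" where
  "constrained_young_tableau p m T \<longleftrightarrow>
     (\<exists>K::nat. (\<lambda>(i,j). T i j) ` ({1..p} \<times> {1..m}) = {1..K}) \<and>
     (\<forall>i\<in>{1..p}. \<forall>j\<in>{1..m}. \<forall>j'\<in>{1..m}. j \<le> j' \<longrightarrow> T i j \<le> T i j') \<and>
     (\<forall>j\<in>{1..m}. \<forall>i\<in>{1..p}. \<forall>i'\<in>{1..p}. i \<le> i' \<longrightarrow> T i j \<le> T i' j) \<and>
     (\<forall>i\<in>{1..p}. \<forall>j. 1 \<le> j \<and> j < m \<longrightarrow> T i j = T i (j+1) \<longrightarrow>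
         (\<forall>i'\<in>{1..p}. T i' j = T i' (j+1))) \<and>
     (\<forall>j\<in>{1..m}. \<forall>i. 1 \<le> i \<and> i < p \<longrightarrow> T i j = T (i+1) j \<longrightarrow>
         (\<forall>j'\<in>{1..m}. T i j' = T (i+1) j'))"

end

theory Submission
  imports Defs
begin

definition cons :: "(nat \<times> real) set \<Rightarrow> bool" where
  "cons P \<longleftrightarrow> (\<forall>p\<in>P. \<forall>q\<in>P. fst p < fst q \<longleftrightarrow> snd p < snd q)"

definition rel :: "nat \<times> real \<Rightarrow> nat \<times> real \<Rightarrow> bool" where
  "rel p a \<longleftrightarrow> (fst p < fst a \<longleftrightarrow> snd p < snd a) \<and> (fst a < fst p \<longleftrightarrow> snd a < snd p)"

lemma cons_insert:
  "cons (insert a P) \<longleftrightarrow> cons P \<and> (\<forall>p\<in>P. rel p a)"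
  unfolding cons_def rel_def by auto

lemma ins:
  assumes "finite P" "cons P"
  shows "\<exists>t. \<forall>p\<in>P. rel p (v, t)"
proof (cases "\<exists>q\<in>P. fst q = v")
  case True
  then obtain q where q: "q \<in> P" "fst q = v" by blast
  show ?thesis
    by (rule exI[of _ "snd q"]) (use assms(2) q in \<open>auto simp: cons_def rel_def\<close>)
next
  case False
  define L where "L = snd ` {p\<in>P. fst p < v}"
  define H where "H = snd ` {p\<in>P. v < fst p}"
  have fL: "finite L" "finite H" using assms(1) by (auto simp: L_def H_def)
  have LH: "\<forall>l\<in>L. \<forall>h\<in>H. l < h"
    using assms(2) unfolding L_def H_def cons_def by force
  have "\<exists>t. (\<forall>l\<in>L. l < t) \<and> (\<forall>h\<in>H. t < h)"
  proof (cases "L = {}")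
    case True
    show ?thesis
    proof (cases "H = {}")
      case True then show ?thesis using \<open>L = {}\<close> by auto
    next
      case False
      show ?thesis
      proof (rule exI[of _ "Min H - 1"], intro conjI ballI)
        fix h assume "h \<in> H" then show "Min H - 1 < h" using Min_le[OF fL(2)] by fastforce
      qed (use True in auto)
    qed
  next
    case LF: False
    show ?thesis
    proof (cases "H = {}")
      case True
      show ?thesis
      proof (rule exI[of _ "Max L + 1"], intro conjI ballI)
        fix l assume "l \<in> L" then show "l < Max L + 1" using Max_ge[OF fL(1)] by fastforce
      qed (use True in auto)
    next
      case False
      have "Max L < Min H" using LH LF False fL by auto
      show ?thesis
      proof (rule exI[of _ "(Max L + Min H)/2"], intro conjI ballI)
        fix l assume "l \<in> L" then show "l < (Max L + Min H)/2"
          using Max_ge[OF fL(1)] \<open>Max L < Min H\<close> by fastforce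
      next
        fix h assume "h \<in> H" then show "(Max L + Min H)/2 < h"
          using Min_le[OF fL(2)] \<open>Max L < Min H\<close> by fastforce
      qed
    qed
  qed
  then obtain t where t: "\<forall>l\<in>L. l < t" "\<forall>h\<in>H. t < h" by blast
  show ?thesis
  proof (rule exI[of _ t], intro ballI)
    fix p assume p: "p \<in> P"
    then have "fst p \<noteq> v" using False by blast
    then consider "fst p < v" | "v < fst p" by linarith
    then show "rel p (v, t)"
    proof cases
      case 1
      then have "snd p \<in> L" using p by (auto simp: L_def)
      then show ?thesis using t 1 by (auto simp: rel_def)
    next
      case 2
      then have "snd p \<in> H" using p by (auto simp: H_def)
      then show ?thesis using t 2 by (auto simp: rel_def)
    qed
  qed
qed

definition Pts :: "(nat\<Rightarrow>nat) \<Rightarrow> (nat\<Rightarrow>nat) \<Rightarrow> nat \<Rightarrow> (nat \<Rightarrow> real) \<Rightarrow> (nat\<times>real) set" where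
  "Pts x y n g = (\<lambda>j. (x j, g j)) ` {1..n} \<union> (\<lambda>j. (y j, g j + 1)) ` {1..n}"

lemma Pts_Suc:
  "Pts x y (Suc n) (g(Suc n := t)) = insert (x (Suc n), t) (insert (y (Suc n), t + 1) (Pts x y n g))"
proof -
  have a: "Pts x y n (g(Suc n := t)) = Pts x y n g"
    unfolding Pts_def by (auto simp: image_def)
  have "{1..Suc n} = insert (Suc n) {1..n}" by auto
  then show ?thesis using a unfolding Pts_def by auto
qed

lemma main:
  assumes mono: "\<forall>j j'. 1 \<le> j \<longrightarrow> j \<le> j' \<longrightarrow> j' \<le> N \<longrightarrow> x j \<le> x j' \<and> y j \<le> y j'"
    and lt: "\<forall>j. 1 \<le> j \<longrightarrow> j \<le> N \<longrightarrow> x j < y j"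
    and eq: "\<forall>j. 1 \<le> j \<longrightarrow> j < N \<longrightarrow> (x j = x (Suc j) \<longleftrightarrow> y j = y (Suc j))"
  shows "n \<le> N \<Longrightarrow> \<exists>g. cons (Pts x y n g)"
proof (induction n)
  case 0
  then show ?case by (auto simp: Pts_def cons_def)
next
  case (Suc n)
  then obtain g where g: "cons (Pts x y n g)" by auto
  let ?P = "Pts x y n g"
  let ?v = "x (Suc n)" and ?w = "y (Suc n)"
  have fin: "finite ?P" by (simp add: Pts_def)
  obtain t where R1: "\<forall>p\<in>?P. rel p (?v, t)" using ins[OF fin g] by blast
  have vw: "?v < ?w" using lt Suc.prems by auto
  have R2: "\<forall>p\<in>?P. rel p (?w, t + 1)"
  proof (cases "n \<ge> 1 \<and> x (Suc n) = x n")
    case True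
    then have yy: "y (Suc n) = y n" using eq Suc.prems by auto
    have "(x n, g n) \<in> ?P" using True by (auto simp: Pts_def)
    then have "t = g n" using R1 True by (auto simp: rel_def)
    moreover have "(y n, g n + 1) \<in> ?P" using True by (auto simp: Pts_def)
    ultimately show ?thesis
    proof -
      assume tg: "t = g n" and mem: "(y n, g n + 1) \<in> ?P"
      have c: "\<forall>p\<in>?P. \<forall>q\<in>?P. fst p < fst q \<longleftrightarrow> snd p < snd q" using g by (simp add: cons_def)
      show ?thesis
      proof
        fix p assume p: "p \<in> ?P"
        show "rel p (?w, t + 1)"
          using c[rule_format, OF p mem] c[rule_format, OF mem p] tg yy by (simp add: rel_def)
      qed
    qed
  next
    case False
    have xs: "\<forall>j\<in>{1..n}. x j < ?v \<and> y j < ?w"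
    proof
      fix j assume j: "j \<in> {1..n}"
      have "x j \<le> x n" "y j \<le> y n" using mono j Suc.prems by auto
      moreover have "x n \<le> ?v" "y n \<le> ?w" using mono j Suc.prems by auto
      moreover have "x n \<noteq> ?v" using False j by auto
      moreover have "y n \<noteq> ?w" using eq j Suc.prems \<open>x n \<noteq> ?v\<close> by auto
      ultimately show "x j < ?v \<and> y j < ?w" by auto
    qed
    have gs: "\<forall>j\<in>{1..n}. g j < t"
    proof
      fix j assume j: "j \<in> {1..n}"
      then have "(x j, g j) \<in> ?P" by (auto simp: Pts_def)
      then show "g j < t" using R1 xs j by (auto simp: rel_def)
    qed
    show ?thesis
    proof
      fix p assume "p \<in> ?P"
      then obtain j where j: "j \<in> {1..n}" "p = (x j, g j) \<or> p = (y j, g j + 1)"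
        unfolding Pts_def by auto
      have "x j < ?v" "y j < ?w" "g j < t" using xs gs j by auto
      then have "x j < ?w" using vw by linarith
      show "rel p (?w, t + 1)" using j(2) \<open>x j < ?w\<close> \<open>y j < ?w\<close> \<open>g j < t\<close>
        by (auto simp: rel_def)
    qed
  qed
  have "cons (insert (?v, t) (insert (?w, t + 1) ?P))"
    unfolding cons_insert using g R1 R2 vw by (auto simp: rel_def)
  then show ?case using Pts_Suc by metis
qed

theorem proposition2p6:
  fixes m :: nat and T :: "nat \<Rightarrow> nat \<Rightarrow> nat"
  assumes "m \<ge> 1"
    and "constrained_young_tableau 2 m T"
  shows "\<exists>(a::nat \<Rightarrow> real) (b::nat \<Rightarrow> real).
           a 1 = 0 \<and> a 1 \<le> a 2 \<and> b 1 = 0 \<and>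
           (\<forall>j\<in>{1..m}. \<forall>j'\<in>{1..m}. j \<le> j' \<longrightarrow> b j \<le> b j') \<and>
           (\<forall>i\<in>{1..2}. \<forall>j\<in>{1..m}. \<forall>i'\<in>{1..2}. \<forall>j'\<in>{1..m}.
              (T i j < T i' j' \<longleftrightarrow> a i + b j < a i' + b j') \<and>
              (T i j = T i' j' \<longleftrightarrow> a i + b j = a i' + b j'))"
proof -
  have two: "{1..2::nat} = {1,2}" by auto
  note D = assms(2)[unfolded constrained_young_tableau_def two]
  have rowm: "\<forall>i\<in>{1,2}. \<forall>j\<in>{1..m}. \<forall>j'\<in>{1..m}. j \<le> j' \<longrightarrow> T i j \<le> T i j'"
    and D3: "\<forall>j\<in>{1..m}. \<forall>i\<in>{1,2}. \<forall>i'\<in>{1,2}. i \<le> i' \<longrightarrow> T i j \<le> T i' j"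
    and ci: "\<forall>i\<in>{1,2}. \<forall>j. 1 \<le> j \<and> j < m \<longrightarrow> T i j = T i (j+1) \<longrightarrow>
         (\<forall>i'\<in>{1,2}. T i' j = T i' (j+1))"
    and D5: "\<forall>j\<in>{1..m}. \<forall>i. 1 \<le> i \<and> i < 2 \<longrightarrow> T i j = T (i+1) j \<longrightarrow>
         (\<forall>j'\<in>{1..m}. T i j' = T (i+1) j')"
    using D by blast+
  have col: "\<forall>j\<in>{1..m}. T 1 j \<le> T 2 j"
  proof
    fix j assume "j \<in> {1..m}" then show "T 1 j \<le> T 2 j" using D3 by simp
  qed
  have cii: "\<forall>j\<in>{1..m}. T 1 j = T 2 j \<longrightarrow> (\<forall>j'\<in>{1..m}. T 1 j' = T 2 j')"
  proof (intro ballI impI)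
    fix j j' assume "j \<in> {1..m}" "T 1 j = T 2 j" "j' \<in> {1..m}"
    moreover have e: "(1::nat) + 1 = 2" by simp
    ultimately show "T 1 j' = T 2 j'" using D5[rule_format, of j 1, unfolded e] by auto
  qed
  show ?thesis
  proof (cases "\<exists>j\<in>{1..m}. T 1 j = T 2 j")
    case True
    then have Tij: "\<forall>j\<in>{1..m}. T 2 j = T 1 j" using cii by metis
    show ?thesis
    proof (rule exI[of _ "\<lambda>_. 0"], rule exI[of _ "\<lambda>j. real (T 1 j) - real (T 1 1)"], intro conjI)
      show "(0::real) = 0" "(0::real) \<le> 0" "real (T 1 1) - real (T 1 1) = 0" by auto
      show "\<forall>j\<in>{1..m}. \<forall>j'\<in>{1..m}. j \<le> j' \<longrightarrow>
              real (T 1 j) - real (T 1 1) \<le> real (T 1 j') - real (T 1 1)"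
      proof (intro ballI impI)
        fix j j' assume jj: "j \<in> {1..m}" "j' \<in> {1..m}" "j \<le> j'"
        then have "T 1 j \<le> T 1 j'" using rowm by force
        then show "real (T 1 j) - real (T 1 1) \<le> real (T 1 j') - real (T 1 1)" by simp
      qed
      show "\<forall>i\<in>{1..2}. \<forall>j\<in>{1..m}. \<forall>i'\<in>{1..2}. \<forall>j'\<in>{1..m}.
              (T i j < T i' j' \<longleftrightarrow> 0 + (real (T 1 j) - real (T 1 1)) < 0 + (real (T 1 j') - real (T 1 1))) \<and>
              (T i j = T i' j' \<longleftrightarrow> 0 + (real (T 1 j) - real (T 1 1)) = 0 + (real (T 1 j') - real (T 1 1)))"
      proof (intro ballI)
        fix i j i' j' :: nat assume h: "i \<in> {1..2}" "j \<in> {1..m}" "i' \<in> {1..2}" "j' \<in> {1..m}"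
        then have "i = 1 \<or> i = 2" "i' = 1 \<or> i' = 2" by auto
        then have "T i j = T 1 j" "T i' j' = T 1 j'" using Tij h by auto
        then show "(T i j < T i' j' \<longleftrightarrow> 0 + (real (T 1 j) - real (T 1 1)) < 0 + (real (T 1 j') - real (T 1 1))) \<and>
              (T i j = T i' j' \<longleftrightarrow> 0 + (real (T 1 j) - real (T 1 1)) = 0 + (real (T 1 j') - real (T 1 1)))"
          by simp
      qed
    qed
  next
    case False
    have lt: "\<forall>j. 1 \<le> j \<longrightarrow> j \<le> m \<longrightarrow> T 1 j < T 2 j"
    proof (intro allI impI)
      fix j assume "1 \<le> j" "j \<le> m"
      then have "j \<in> {1..m}" by simp
      then show "T 1 j < T 2 j" using col False le_neq_implies_less by blast
    qed
    have mono: "\<forall>j j'. 1 \<le> j \<longrightarrow> j \<le> j' \<longrightarrow> j' \<le> m \<longrightarrow> T 1 j \<le> T 1 j' \<and> T 2 j \<le> T 2 j'"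
      using rowm by auto
    have eq: "\<forall>j. 1 \<le> j \<longrightarrow> j < m \<longrightarrow> (T 1 j = T 1 (Suc j) \<longleftrightarrow> T 2 j = T 2 (Suc j))"
      using ci by auto
    obtain g where g: "cons (Pts (T 1) (T 2) m g)" using main[OF mono lt eq] by blast
    define a :: "nat \<Rightarrow> real" where "a = (\<lambda>i. if i = 2 then 1 else 0)"
    have mem: "(T i j, g j + a i) \<in> Pts (T 1) (T 2) m g" if "i \<in> {1,2}" "j \<in> {1..m}" for i j
      using that unfolding Pts_def a_def by auto
    have key: "T i j < T i' j' \<longleftrightarrow> g j + a i < g j' + a i'"
      if "i \<in> {1,2}" "j \<in> {1..m}" "i' \<in> {1,2}" "j' \<in> {1..m}" for i j i' j'
      using g mem[OF that(1,2)] mem[OF that(3,4)] unfolding cons_def by fastforce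
    show ?thesis
    proof (rule exI[of _ a], rule exI[of _ "\<lambda>j. g j - g 1"], intro conjI)
      show "a 1 = 0" "a 1 \<le> a 2" "g 1 - g 1 = 0" by (auto simp: a_def)
      show "\<forall>j\<in>{1..m}. \<forall>j'\<in>{1..m}. j \<le> j' \<longrightarrow> g j - g 1 \<le> g j' - g 1"
      proof (intro ballI impI)
        fix j j' assume jj: "j \<in> {1..m}" "j' \<in> {1..m}" "j \<le> j'"
        then have "\<not> T 1 j' < T 1 j" using rowm by force
        then have "\<not> g j' + a 1 < g j + a 1" using key[of 1 j' 1 j] jj by auto
        then show "g j - g 1 \<le> g j' - g 1" by auto
      qed
      show "\<forall>i\<in>{1..2}. \<forall>j\<in>{1..m}. \<forall>i'\<in>{1..2}. \<forall>j'\<in>{1..m}.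
              (T i j < T i' j' \<longleftrightarrow> a i + (g j - g 1) < a i' + (g j' - g 1)) \<and>
              (T i j = T i' j' \<longleftrightarrow> a i + (g j - g 1) = a i' + (g j' - g 1))"
      proof (intro ballI conjI)
        fix i j i' j' :: nat assume h: "i \<in> {1..2}" "j \<in> {1..m}" "i' \<in> {1..2}" "j' \<in> {1..m}"
        then have h': "i \<in> {1,2}" "i' \<in> {1,2}" by auto
        have k1: "T i j < T i' j' \<longleftrightarrow> g j + a i < g j' + a i'" using key[OF h'(1) h(2) h'(2) h(4)] .
        have k2: "T i' j' < T i j \<longleftrightarrow> g j' + a i' < g j + a i" using key[OF h'(2) h(4) h'(1) h(2)] .
        show "T i j < T i' j' \<longleftrightarrow> a i + (g j - g 1) < a i' + (g j' - g 1)" using k1 by auto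
        show "T i j = T i' j' \<longleftrightarrow> a i + (g j - g 1) = a i' + (g j' - g 1)"
        proof -
          have e1: "T i j = T i' j' \<longleftrightarrow> \<not> T i j < T i' j' \<and> \<not> T i' j' < T i j" by auto
          have e2: "(a i + (g j - g 1) = a i' + (g j' - g 1)) \<longleftrightarrow>
             \<not> g j + a i < g j' + a i' \<and> \<not> g j' + a i' < g j + a i" by auto
          show ?thesis unfolding e1 e2 k1 k2 ..
        qed
      qed
    qed
  qed
qed

end
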